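(* Let $F'_X\le F_X$ and $F_Z$ be distribution functions, and let $\phi'$ and $\phi$ be the canonical generators of $(F'_X,F_Z)$ and $(F_X,F_Z)$ respectively. Then $\phi'\le\phi$ pointwise on $[0,1]$.
   Context: A distribution function is a non-decreasing map $F:\mathbb R\to[0,1]$ (no right-continuity assumed) with limits $0$ at $-\infty$ and $1$ at $+\infty$; $f(x\pm)$ denote one-sided limits. The canonical generator $\phi$ of $(F_X,F_Z)$: with $F=F_XF_Z$, $\phi(0)=0$, $\phi(1)=1$, and for $u\in(0,1)$ choose $x_0$ with $F(x_0-)\le u\le F(x_0+)$, set $u_-=F(x_0-)$, $u_l=F_X(x_0-)F_Z(x_0)$, $u_u=F_X(x_0+)F_Z(x_0)$, $u_+=F(x_0+)$, and $\phi(u)=F_X(x_0-)$ if $u_-\le u\le u_l$, $\phi(u)=u/F_Z(x_0)$ if $u_l\le u\le u_u$, $\phi(u)=F_X(x_0+)$ if $u_u\le u\le u_+$ (this is independent of the choices). *)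

theory Defs
  imports Complex_Main
begin

text \<open>Distribution function: non-decreasing, values in [0,1], limits 0 at -infinity
  and 1 at +infinity (no right-continuity assumed).\<close>
definition distribution_function :: "(real \<Rightarrow> real) \<Rightarrow> bool" where
  "distribution_function F \<longleftrightarrow>
     mono F \<and> (\<forall>x. 0 \<le> F x \<and> F x \<le> 1) \<and>
     (F \<longlongrightarrow> 0) at_bot \<and> (F \<longlongrightarrow> 1) at_top"

definition lim_left :: "(real \<Rightarrow> real) \<Rightarrow> real \<Rightarrow> real" where
  "lim_left f x = Lim (at_left x) f"

definition lim_right :: "(real \<Rightarrow> real) \<Rightarrow> real \<Rightarrow> real" where
  "lim_right f x = Lim (at_right x) f"

definition canonical_generator ::
  "(real \<Rightarrow> real) \<Rightarrow> (real \<Rightarrow> real) \<Rightarrow> real \<Rightarrow> real" where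
  "canonical_generator FX FZ u =
     (if u = 0 then 0 else if u = 1 then 1 else
      (let F = (\<lambda>x. FX x * FZ x);
           x0 = (SOME x0. lim_left F x0 \<le> u \<and> u \<le> lim_right F x0);
           ul = lim_left FX x0 * FZ x0;
           uu = lim_right FX x0 * FZ x0
       in if u \<le> ul then lim_left FX x0
          else if u \<le> uu then u / FZ x0
          else lim_right FX x0))"

end

theory Submission
  imports Defs "HOL-Analysis.Analysis"
begin

lemma ll_tends:
  assumes "mono G" "\<forall>x. 0 \<le> G x \<and> G x \<le> 1"
  shows "(G \<longlongrightarrow> lim_left G x) (at_left x)"
proof -
  have "(G \<longlongrightarrow> Sup (G ` ({..<x} \<inter> UNIV))) (at x within ({..<x} \<inter> UNIV))"
    by (rule Lim_left_bound[where K=1]) (use assms in \<open>auto simp: mono_def\<close>)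
  then have "(G \<longlongrightarrow> Sup (G ` ({..<x} \<inter> UNIV))) (at_left x)" by simp
  moreover then have "lim_left G x = Sup (G ` ({..<x} \<inter> UNIV))"
    unfolding lim_left_def by (intro tendsto_Lim) auto
  ultimately show ?thesis by simp
qed

lemma lr_tends:
  assumes "mono G" "\<forall>x. 0 \<le> G x \<and> G x \<le> 1"
  shows "(G \<longlongrightarrow> lim_right G x) (at_right x)"
proof -
  have "(G \<longlongrightarrow> Inf (G ` ({x<..} \<inter> UNIV))) (at x within ({x<..} \<inter> UNIV))"
    by (rule Lim_right_bound[where K=0]) (use assms in \<open>auto simp: mono_def\<close>)
  then have "(G \<longlongrightarrow> Inf (G ` ({x<..} \<inter> UNIV))) (at_right x)" by simp
  moreover then have "lim_right G x = Inf (G ` ({x<..} \<inter> UNIV))"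
    unfolding lim_right_def by (intro tendsto_Lim) auto
  ultimately show ?thesis by simp
qed

lemma ll_le:
  assumes "mono G" "\<forall>x. 0 \<le> G x \<and> G x \<le> 1" "\<forall>\<^sub>F y in at_left x. G y \<le> a"
  shows "lim_left G x \<le> a"
  by (rule tendsto_upperbound[OF ll_tends[OF assms(1,2)] assms(3)]) simp

lemma ll_ge:
  assumes "mono G" "\<forall>x. 0 \<le> G x \<and> G x \<le> 1" "\<forall>\<^sub>F y in at_left x. a \<le> G y"
  shows "a \<le> lim_left G x"
  by (rule tendsto_lowerbound[OF ll_tends[OF assms(1,2)] assms(3)]) simp

lemma lr_le:
  assumes "mono G" "\<forall>x. 0 \<le> G x \<and> G x \<le> 1" "\<forall>\<^sub>F y in at_right x. G y \<le> a"
  shows "lim_right G x \<le> a"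
  by (rule tendsto_upperbound[OF lr_tends[OF assms(1,2)] assms(3)]) simp

lemma lr_ge:
  assumes "mono G" "\<forall>x. 0 \<le> G x \<and> G x \<le> 1" "\<forall>\<^sub>F y in at_right x. a \<le> G y"
  shows "a \<le> lim_right G x"
  by (rule tendsto_lowerbound[OF lr_tends[OF assms(1,2)] assms(3)]) simp

lemma ll_props:
  assumes "mono G" "\<forall>x. 0 \<le> G x \<and> G x \<le> 1"
  shows "0 \<le> lim_left G x" "lim_left G x \<le> G x" "G x \<le> lim_right G x"
    "lim_left G x \<le> lim_right G x" "0 \<le> lim_right G x"
proof -
  show a: "0 \<le> lim_left G x" using assms by (intro ll_ge) auto
  show b: "lim_left G x \<le> G x"
    by (rule ll_le[OF assms], rule eventually_mono[OF eventually_at_left_real[of "x-1" x]])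
      (auto intro!: monoD[OF assms(1)])
  show c: "G x \<le> lim_right G x"
    by (rule lr_ge[OF assms], rule eventually_mono[OF eventually_at_right_real[of x "x+1"]])
      (auto intro!: monoD[OF assms(1)])
  show "lim_left G x \<le> lim_right G x" using b c by simp
  show "0 \<le> lim_right G x" using a b c by simp
qed

lemma lr_ll_lt:
  assumes "mono G" "\<forall>x. 0 \<le> G x \<and> G x \<le> 1" "x < y"
  shows "lim_right G x \<le> lim_left G y"
proof -
  define m where "m = (x+y)/2"
  have m: "x < m" "m < y" using assms(3) by (auto simp: m_def)
  have "lim_right G x \<le> G m"
    by (rule lr_le[OF assms(1,2)], rule eventually_mono[OF eventually_at_right_real[of x m]])
      (use m in \<open>auto intro!: monoD[OF assms(1)]\<close>)
  also have "G m \<le> lim_left G y"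
    by (rule ll_ge[OF assms(1,2)], rule eventually_mono[OF eventually_at_left_real[of m y]])
      (use m in \<open>auto intro!: monoD[OF assms(1)]\<close>)
  finally show ?thesis .
qed

lemma ll_mult:
  assumes "mono G" "\<forall>x. 0 \<le> G x \<and> G x \<le> 1" "mono H" "\<forall>x. 0 \<le> H x \<and> H x \<le> 1"
  shows "lim_left (\<lambda>x. G x * H x) x = lim_left G x * lim_left H x"
    "lim_right (\<lambda>x. G x * H x) x = lim_right G x * lim_right H x"
  unfolding lim_left_def lim_right_def
  by (intro tendsto_Lim tendsto_mult ll_tends[OF assms(1,2), unfolded lim_left_def]
      ll_tends[OF assms(3,4), unfolded lim_left_def] lr_tends[OF assms(1,2), unfolded lim_right_def]
      lr_tends[OF assms(3,4), unfolded lim_right_def]; simp)+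


lemma ll_mono_fun:
  assumes "mono G" "\<forall>x. 0 \<le> G x \<and> G x \<le> 1" "mono H" "\<forall>x. 0 \<le> H x \<and> H x \<le> 1"
    "\<forall>x. G x \<le> H x"
  shows "lim_left G x \<le> lim_left H x" "lim_right G x \<le> lim_right H x"
  by (rule tendsto_le[OF _ ll_tends[OF assms(3,4)] ll_tends[OF assms(1,2)]], use assms(5) in auto)
     (rule tendsto_le[OF _ lr_tends[OF assms(3,4)] lr_tends[OF assms(1,2)]], use assms(5) in auto)

lemma prod_df:
  fixes G H :: "real \<Rightarrow> real"
  assumes "mono G" "\<forall>x. 0 \<le> G x \<and> G x \<le> 1" "mono H" "\<forall>x. 0 \<le> H x \<and> H x \<le> 1"
  shows "mono (\<lambda>x. G x * H x)" "\<forall>x. 0 \<le> G x * H x \<and> G x * H x \<le> 1"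
proof -
  show "mono (\<lambda>x. G x * H x)"
    unfolding mono_def
  proof (intro allI impI)
    fix x y :: real assume "x \<le> y"
    then show "G x * H x \<le> G y * H y"
      using assms monoD[OF assms(1) \<open>x \<le> y\<close>] monoD[OF assms(3) \<open>x \<le> y\<close>]
      by (intro mult_mono) auto
  qed
  show "\<forall>x. 0 \<le> G x * H x \<and> G x * H x \<le> 1"
    using assms by (auto intro: mult_le_one)
qed

lemma exists_x0:
  assumes "mono F" "\<forall>x. 0 \<le> F x \<and> F x \<le> 1" "(F \<longlongrightarrow> 0) at_bot" "(F \<longlongrightarrow> 1) at_top"
    "0 < u" "u < 1"
  shows "\<exists>x. lim_left F x \<le> u \<and> u \<le> lim_right F x"
proof -
  define S where "S = {x. F x < u}"
  have "\<forall>\<^sub>F x in at_bot. F x < u" using order_tendstoD(2)[OF assms(3) assms(5)] .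
  then obtain N where N: "\<And>x. x \<le> N \<Longrightarrow> F x < u" by (auto simp: eventually_at_bot_linorder)
  have "\<forall>\<^sub>F x in at_top. u < F x" using order_tendstoD(1)[OF assms(4) assms(6)] .
  then obtain M where M: "\<And>x. x \<ge> M \<Longrightarrow> u < F x" by (auto simp: eventually_at_top_linorder)
  have ne: "S \<noteq> {}" using N[of N] by (auto simp: S_def)
  have bdd: "bdd_above S"
  proof (rule bdd_aboveI[of _ M])
    fix x assume "x \<in> S"
    then have "F x < u" by (simp add: S_def)
    then show "x \<le> M" using M[of x] by (cases "x \<le> M") auto
  qed
  define x where "x = Sup S"
  have "lim_left F x \<le> u"
  proof (rule ll_le[OF assms(1,2)], rule eventually_mono[OF eventually_at_left_real[of "x-1" x]])
    show "x - 1 < x" by simp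
    fix y assume "y \<in> {x-1<..<x}"
    then have "y < Sup S" by (simp add: x_def)
    then obtain s where "s \<in> S" "y < s" using less_cSupD[OF ne] by blast
    then show "F y \<le> u" using monoD[OF assms(1), of y s] by (auto simp: S_def)
  qed
  moreover have "u \<le> lim_right F x"
  proof (rule lr_ge[OF assms(1,2)], rule eventually_mono[OF eventually_at_right_real[of x "x+1"]])
    show "x < x + 1" by simp
    fix y assume "y \<in> {x<..<x+1}"
    then have "y \<notin> S" using cSup_upper[OF _ bdd, of y] by (auto simp: x_def)
    then show "u \<le> F y" by (auto simp: S_def)
  qed
  ultimately show ?thesis by blast
qed

definition gval :: "real \<Rightarrow> real \<Rightarrow> real \<Rightarrow> real \<Rightarrow> real" where
  "gval a b z u = (if u \<le> a*z then a else if u \<le> b*z then u/z else b)"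

lemma gval_pos:
  assumes "z > 0"
  shows "gval a b z u = (if u/z \<le> a then a else if u/z \<le> b then u/z else b)"
  using assms by (simp add: gval_def pos_divide_le_eq)

lemma G1:
  assumes "0 < u" "0 \<le> z" "a \<le> b"
  shows "a \<le> gval a b z u \<and> gval a b z u \<le> b"
proof (cases "z = 0")
  case True then show ?thesis using assms by (simp add: gval_def)
next
  case False then have "z > 0" using assms by simp
  then show ?thesis using assms by (auto simp: gval_pos)
qed

lemma G2:
  assumes "0 < u" "0 \<le> z" "a \<le> b" "0 < w" "u \<le> b*w" "z \<le> w"
  shows "u / w \<le> gval a b z u"
proof (cases "z = 0")
  case True then show ?thesis using assms by (simp add: gval_def field_simps)
next
  case False then have z: "z > 0" using assms by simp
  have "u/w \<le> u/z" using z assms by (intro divide_left_mono) auto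
  moreover have "u/w \<le> b" using assms by (simp add: field_simps)
  ultimately show ?thesis using z assms by (auto simp: gval_pos)
qed

lemma G3:
  assumes "0 < u" "a \<le> b" "0 < w" "a*w \<le> u" "w \<le> z"
  shows "gval a b z u \<le> u / w"
proof -
  have z: "z > 0" using assms by simp
  have "u/z \<le> u/w" using z assms by (intro divide_left_mono) auto
  moreover have "a \<le> u/w" using assms by (simp add: field_simps)
  ultimately show ?thesis using z assms by (auto simp: gval_pos)
qed

lemma G4:
  assumes "0 < u" "0 \<le> z" "a' \<le> a" "b' \<le> b" "a' \<le> b'" "a \<le> b"
  shows "gval a' b' z u \<le> gval a b z u"
proof (cases "z = 0")
  case True then show ?thesis using assms by (simp add: gval_def)
next
  case False then have z: "z > 0" using assms by simp
  show ?thesis unfolding gval_pos[OF z] using assms by auto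
qed

lemma cg_eq:
  assumes "u \<noteq> 0" "u \<noteq> 1"
    "x0 = (SOME x0. lim_left (\<lambda>x. FX x * FZ x) x0 \<le> u \<and> u \<le> lim_right (\<lambda>x. FX x * FZ x) x0)"
  shows "canonical_generator FX FZ u = gval (lim_left FX x0) (lim_right FX x0) (FZ x0) u"
  using assms unfolding canonical_generator_def gval_def Let_def by simp

lemma df_unfold:
  assumes "distribution_function G"
  shows "mono G" "\<forall>x. 0 \<le> G x \<and> G x \<le> 1" "(G \<longlongrightarrow> 0) at_bot" "(G \<longlongrightarrow> 1) at_top"
  using assms by (auto simp: distribution_function_def)

lemma prod_lims:
  assumes "distribution_function G" "distribution_function H"
  shows "((\<lambda>x. G x * H x) \<longlongrightarrow> 0) at_bot" "((\<lambda>x. G x * H x) \<longlongrightarrow> 1) at_top"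
  using tendsto_mult[OF df_unfold(3)[OF assms(1)] df_unfold(3)[OF assms(2)]]
    tendsto_mult[OF df_unfold(4)[OF assms(1)] df_unfold(4)[OF assms(2)]] by simp_all

theorem lemma1:
  fixes FX' FX FZ :: "real \<Rightarrow> real"
  assumes "distribution_function FX'"
    and "distribution_function FX"
    and "distribution_function FZ"
    and "\<forall>x. FX' x \<le> FX x"
  shows "\<forall>u \<in> {0..1}. canonical_generator FX' FZ u \<le> canonical_generator FX FZ u"
proof
  fix u :: real assume u01: "u \<in> {0..1}"
  show "canonical_generator FX' FZ u \<le> canonical_generator FX FZ u"
  proof (cases "u = 0 \<or> u = 1")
    case True then show ?thesis by (auto simp: canonical_generator_def)
  next
    case False
    then have u: "0 < u" "u < 1" "u \<noteq> 0" "u \<noteq> 1" using u01 by auto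
    note X' = df_unfold[OF assms(1)] and X = df_unfold[OF assms(2)] and Z = df_unfold[OF assms(3)]
    define F where "F = (\<lambda>x. FX x * FZ x)"
    define F' where "F' = (\<lambda>x. FX' x * FZ x)"
    note P = prod_df[OF X(1,2) Z(1,2), folded F_def]
    note P' = prod_df[OF X'(1,2) Z(1,2), folded F'_def]
    define x0 where "x0 = (SOME x0. lim_left F x0 \<le> u \<and> u \<le> lim_right F x0)"
    define x1 where "x1 = (SOME x0. lim_left F' x0 \<le> u \<and> u \<le> lim_right F' x0)"
    have "\<exists>x. lim_left F x \<le> u \<and> u \<le> lim_right F x"
      unfolding F_def by (rule exists_x0[OF prod_df[OF X(1,2) Z(1,2)] prod_lims[OF assms(2,3)] u(1,2)])
    then have x0: "lim_left F x0 \<le> u" "u \<le> lim_right F x0"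
      unfolding x0_def by (metis (mono_tags, lifting) someI_ex)+
    have "\<exists>x. lim_left F' x \<le> u \<and> u \<le> lim_right F' x"
      unfolding F'_def by (rule exists_x0[OF prod_df[OF X'(1,2) Z(1,2)] prod_lims[OF assms(1,3)] u(1,2)])
    then have x1: "lim_left F' x1 \<le> u" "u \<le> lim_right F' x1"
      unfolding x1_def by (metis (mono_tags, lifting) someI_ex)+
    have cg: "canonical_generator FX FZ u = gval (lim_left FX x0) (lim_right FX x0) (FZ x0) u"
      by (rule cg_eq[OF u(3,4)]) (simp add: x0_def F_def)
    have cg': "canonical_generator FX' FZ u = gval (lim_left FX' x1) (lim_right FX' x1) (FZ x1) u"
      by (rule cg_eq[OF u(3,4)]) (simp add: x1_def F'_def)
    have Fl: "lim_left F x = lim_left FX x * lim_left FZ x" "lim_right F x = lim_right FX x * lim_right FZ x"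
      for x unfolding F_def using ll_mult[OF X(1,2) Z(1,2)] by auto
    have F'l: "lim_left F' x = lim_left FX' x * lim_left FZ x" "lim_right F' x = lim_right FX' x * lim_right FZ x"
      for x unfolding F'_def using ll_mult[OF X'(1,2) Z(1,2)] by auto
    note LX = ll_props[OF X(1,2)] and LX' = ll_props[OF X'(1,2)] and LZ = ll_props[OF Z(1,2)]
    note MF = ll_mono_fun[OF X'(1,2) X(1,2) assms(4)]
    have Z0: "0 \<le> FZ x" for x using Z(2) by auto
    consider "x1 < x0" | "x1 = x0" | "x0 < x1" by linarith
    then show ?thesis
    proof cases
      case 1
      have "canonical_generator FX' FZ u \<le> lim_right FX' x1"
        unfolding cg' using G1[OF u(1) Z0 LX'(4)] by blast
      also have "\<dots> \<le> lim_right FX x1" by (rule MF(2))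
      also have "\<dots> \<le> lim_left FX x0" by (rule lr_ll_lt[OF X(1,2) 1])
      also have "\<dots> \<le> canonical_generator FX FZ u"
        unfolding cg using G1[OF u(1) Z0 LX(4)] by blast
      finally show ?thesis .
    next
      case 2
      show ?thesis unfolding cg cg' 2
        by (rule G4[OF u(1) Z0 MF(1) MF(2) LX'(4) LX(4)])
    next
      case 3
      define w0 where "w0 = lim_right FZ x0"
      define w1 where "w1 = lim_left FZ x1"
      have w01: "w0 \<le> w1" unfolding w0_def w1_def by (rule lr_ll_lt[OF Z(1,2) 3])
      have uw0: "u \<le> lim_right FX x0 * w0" using x0(2) Fl(2) w0_def by simp
      have w0pos: "0 < w0"
      proof (rule ccontr)
        assume "\<not> 0 < w0"
        then have "w0 = 0" using LZ(5)[of x0] w0_def by simp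
        then show False using uw0 u(1) by simp
      qed
      have "canonical_generator FX' FZ u \<le> u / w1"
        unfolding cg' 
      proof (rule G3[OF u(1) LX'(4)])
        show "0 < w1" using w0pos w01 by simp
        show "lim_left FX' x1 * w1 \<le> u" using x1(1) F'l(1) w1_def by simp
        show "w1 \<le> FZ x1" using LZ(2) w1_def by simp
      qed
      also have "\<dots> \<le> u / w0" using w0pos w01 u(1) by (intro divide_left_mono) auto
      also have "\<dots> \<le> canonical_generator FX FZ u"
        unfolding cg
      proof (rule G2[OF u(1) Z0 LX(4) w0pos uw0])
        show "FZ x0 \<le> w0" using LZ(3) w0_def by simp
      qed
      finally show ?thesis .
    qed
  qed
qed

end
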